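(* Let $N\geq 2$ and let $p(\theta)=a_0+\sum_{k=1}^{N}(a_k\cos k\theta+b_k\sin k\theta)$ be a real trigonometric polynomial of degree $N$ (so $a_N\neq 0$ or $b_N\neq 0$). Let $\gamma(\theta)=\big(p(\theta)\cos\theta-p'(\theta)\sin\theta,\ p(\theta)\sin\theta+p'(\theta)\cos\theta\big)$ for $\theta\in\,]-\pi,\pi[$, let $\mathcal{C}$ be the curve it describes, and let $\mathcal{P}(t)=\gamma(2\arctan t)$, $t\in\mathbb{R}$. Let $q$ be the number of times $\gamma$ traces $\mathcal{C}$, i.e. the positive integer such that for all but finitely many $t\in\mathbb{R}$ the set $\{s\in\mathbb{R}:\mathcal{P}(s)=\mathcal{P}(t)\}$ has exactly $q$ elements. (i) If some coefficient of even index is nonzero, i.e. $a_{2k}\neq 0$ for some integer $k$ with $0\le 2k\le N$, or $b_{2k}\neq 0$ for some integer $k$ with $2\le 2k\le N$, then $q=1$. (ii) If $a_{2k}=0$ and $b_{2k}=0$ for all integers $k$ with $0\leq 2k\leq N$ (with $b_0:=0$), then $q=2$.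
   Context: The map $\theta\mapsto\tan(\theta/2)$ is a bijection $]-\pi,\pi[\to\mathbb{R}$, so $\mathcal{P}$ is a rational parametrization of $\mathcal{C}$. *)

theory Defs
  imports "HOL-Analysis.Analysis"
begin

definition trig_poly :: "(nat \<Rightarrow> real) \<Rightarrow> (nat \<Rightarrow> real) \<Rightarrow> nat \<Rightarrow> real \<Rightarrow> real" where
  "trig_poly a b N \<theta> = a 0 + (\<Sum>k=1..N. a k * cos (real k * \<theta>) + b k * sin (real k * \<theta>))"

definition gamma_curve :: "(real \<Rightarrow> real) \<Rightarrow> real \<Rightarrow> real \<times> real" where
  "gamma_curve p \<theta> =
     (p \<theta> * cos \<theta> - deriv p \<theta> * sin \<theta>, p \<theta> * sin \<theta> + deriv p \<theta> * cos \<theta>)"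

definition ratpar :: "(real \<Rightarrow> real) \<Rightarrow> real \<Rightarrow> real \<times> real" where
  "ratpar p t = gamma_curve p (2 * arctan t)"

end

theory Submission
  imports Defs "HOL-Computational_Algebra.Polynomial"
begin

definition tp :: "real \<Rightarrow> (nat \<Rightarrow> real) \<Rightarrow> (nat \<Rightarrow> real) \<Rightarrow> nat \<Rightarrow> real \<Rightarrow> real" where
  "tp c \<alpha> \<beta> M t = c + (\<Sum>k=1..M. \<alpha> k * cos (real k * t) + \<beta> k * sin (real k * t))"

definition tpoly :: "real \<Rightarrow> (nat \<Rightarrow> real) \<Rightarrow> (nat \<Rightarrow> real) \<Rightarrow> nat \<Rightarrow> complex poly" where
  "tpoly c \<alpha> \<beta> M = monom (complex_of_real c) M +
     (\<Sum>k=1..M. monom ((complex_of_real (\<alpha> k) - \<i> * complex_of_real (\<beta> k))/2) (M+k)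
               + monom ((complex_of_real (\<alpha> k) + \<i> * complex_of_real (\<beta> k))/2) (M-k))"

lemma tpoly_eval: "poly (tpoly c \<alpha> \<beta> M) (cis t) = cis (real M * t) * complex_of_real (tp c \<alpha> \<beta> M t)"
proof -
  have tm: "(complex_of_real (\<alpha> k) - \<i> * complex_of_real (\<beta> k))/2 * cis t ^ (M+k)
      + (complex_of_real (\<alpha> k) + \<i> * complex_of_real (\<beta> k))/2 * cis t ^ (M-k)
      = cis (real M * t) * complex_of_real (\<alpha> k * cos (real k * t) + \<beta> k * sin (real k * t))"
    if "k \<in> {1..M}" for k
  proof -
    have "cis t ^ (M+k) = cis (real (M+k) * t)" by (rule Complex.DeMoivre)
    also have "\<dots> = cis (real M * t) * cis (real k * t)"
      by (simp add: cis_mult algebra_simps)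
    finally have 1: "cis t ^ (M+k) = cis (real M * t) * cis (real k * t)" .
    have "cis t ^ (M-k) = cis (real (M-k) * t)" by (rule Complex.DeMoivre)
    also have "\<dots> = cis (real M * t) * cis (- (real k * t))"
      using that by (simp add: cis_mult algebra_simps of_nat_diff)
    finally have 2: "cis t ^ (M-k) = cis (real M * t) * cis (- (real k * t))" .
    show ?thesis unfolding 1 2
      by (simp add: complex_eq_iff cis.sel field_simps)
  qed
  have "poly (tpoly c \<alpha> \<beta> M) (cis t) = complex_of_real c * cis t ^ M +
     (\<Sum>k=1..M. (complex_of_real (\<alpha> k) - \<i> * complex_of_real (\<beta> k))/2 * cis t ^ (M+k)
      + (complex_of_real (\<alpha> k) + \<i> * complex_of_real (\<beta> k))/2 * cis t ^ (M-k))"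
    unfolding tpoly_def by (simp add: poly_sum poly_monom)
  also have "\<dots> = complex_of_real c * cis (real M * t) +
     (\<Sum>k=1..M. cis (real M * t) * complex_of_real (\<alpha> k * cos (real k * t) + \<beta> k * sin (real k * t)))"
    by (subst sum.cong[OF refl tm]) (simp_all add: Complex.DeMoivre)
  also have "\<dots> = cis (real M * t) * complex_of_real (tp c \<alpha> \<beta> M t)"
    unfolding tp_def by (simp add: sum_distrib_left distrib_left mult.commute)
  finally show ?thesis .
qed

lemma tpoly_coeff_M: "coeff (tpoly c \<alpha> \<beta> M) M = complex_of_real c"
proof -
  have "(\<Sum>k=1..M. coeff (monom ((complex_of_real (\<alpha> k) - \<i> * complex_of_real (\<beta> k))/2) (M+k)) M
               + coeff (monom ((complex_of_real (\<alpha> k) + \<i> * complex_of_real (\<beta> k))/2) (M-k)) M) = 0"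
    by (rule sum.neutral) (auto simp: coeff_monom)
  then show ?thesis unfolding tpoly_def by (simp add: coeff_sum)
qed

lemma tpoly_coeff_high: assumes "k0 \<in> {1..M}"
  shows "coeff (tpoly c \<alpha> \<beta> M) (M+k0) = (complex_of_real (\<alpha> k0) - \<i> * complex_of_real (\<beta> k0))/2"
proof -
  have "(\<Sum>k=1..M. coeff (monom ((complex_of_real (\<alpha> k) - \<i> * complex_of_real (\<beta> k))/2) (M+k)) (M+k0)
               + coeff (monom ((complex_of_real (\<alpha> k) + \<i> * complex_of_real (\<beta> k))/2) (M-k)) (M+k0))
     = (\<Sum>k=1..M. if k = k0 then (complex_of_real (\<alpha> k) - \<i> * complex_of_real (\<beta> k))/2 else 0)"
    using assms by (intro sum.cong) (auto simp: coeff_monom)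
  also have "\<dots> = (complex_of_real (\<alpha> k0) - \<i> * complex_of_real (\<beta> k0))/2"
    using assms by (simp add: sum.delta)
  finally show ?thesis using assms unfolding tpoly_def by (simp add: coeff_sum coeff_monom)
qed

lemma cis_inj_interval: "inj_on cis {x - 1<..<x + 1}"
proof (rule inj_onI)
  fix s t assume s: "s \<in> {x - 1<..<x + 1}" and t: "t \<in> {x - 1<..<x + 1}" and e: "cis s = cis t"
  from e have "exp (\<i> * complex_of_real s) = exp (\<i> * complex_of_real t)" by (simp add: cis_conv_exp)
  then obtain n :: int where n: "\<i> * complex_of_real s = \<i> * complex_of_real t + (of_int (2 * n) * pi) * \<i>"
    by (auto simp: exp_eq)
  then have "s = t + 2 * of_int n * pi" by (simp add: complex_eq_iff)
  moreover have "\<bar>s - t\<bar> < 2" using s t by auto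
  ultimately have h: "\<bar>of_int n\<bar> * pi < 1" by (simp add: abs_mult)
  have "n = 0"
  proof (rule ccontr)
    assume "n \<noteq> 0"
    then have "\<bar>real_of_int n\<bar> \<ge> 1" by linarith
    then have "\<bar>of_int n\<bar> * pi \<ge> 1 * pi" by (intro mult_right_mono) auto
    with h pi_gt3 show False by linarith
  qed
  with \<open>s = t + 2 * of_int n * pi\<close> show "s = t" by simp
qed

lemma tp_zeros_finite:
  assumes "\<not> (c = 0 \<and> (\<forall>k\<in>{1..M}. \<alpha> k = 0 \<and> \<beta> k = 0))"
  shows "finite {t. x - 1 < t \<and> t < x + 1 \<and> tp c \<alpha> \<beta> M t = 0}"
proof -
  have P: "tpoly c \<alpha> \<beta> M \<noteq> 0"
  proof
    assume P0: "tpoly c \<alpha> \<beta> M = 0"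
    have "c = 0" using tpoly_coeff_M[of c \<alpha> \<beta> M] P0 by simp
    moreover have "\<alpha> k = 0 \<and> \<beta> k = 0" if "k \<in> {1..M}" for k
      using tpoly_coeff_high[OF that, of c \<alpha> \<beta>] P0 by (simp add: complex_eq_iff)
    ultimately show False using assms by blast
  qed
  let ?S = "{t. x - 1 < t \<and> t < x + 1 \<and> tp c \<alpha> \<beta> M t = 0}"
  have "cis ` ?S \<subseteq> {z. poly (tpoly c \<alpha> \<beta> M) z = 0}"
    by (auto simp: tpoly_eval)
  then have "finite (cis ` ?S)" using poly_roots_finite[OF P] finite_subset by blast
  moreover have "inj_on cis ?S" by (rule inj_on_subset[OF cis_inj_interval[of x]]) auto
  ultimately show ?thesis using finite_image_iff by blast
qed

definition btw :: "real \<Rightarrow> real \<Rightarrow> real \<Rightarrow> bool" where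
  "btw s t u \<longleftrightarrow> min s t < u \<and> u < max s t"

lemma deriv_cont_on: "(\<And>x. (f has_real_derivative f' x) (at x)) \<Longrightarrow> continuous_on S f"
  by (rule continuous_at_imp_continuous_on) (blast intro: DERIV_isCont)

lemma incr_from_deriv:
  fixes f :: "real \<Rightarrow> real"
  assumes d: "\<And>x. (f has_real_derivative f' x) (at x)" and "a < b"
    and pos: "\<And>x. a < x \<Longrightarrow> x < b \<Longrightarrow> f' x > 0"
  shows "f a < f b"
proof (rule DERIV_pos_imp_increasing_open[OF \<open>a < b\<close>])
  show "\<exists>y. (f has_real_derivative y) (at x) \<and> 0 < y" if "a < x" "x < b" for x
    using d pos that by blast
  show "continuous_on {a..b} f" by (rule deriv_cont_on[OF d])
qed

lemma sin_lip: "\<bar>sin x - sin y\<bar> \<le> \<bar>x - y\<bar>" for x y :: real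
proof -
  have e: "\<bar>sin x - sin y\<bar> = 2 * \<bar>sin ((x - y) / 2)\<bar> * \<bar>cos ((x + y) / 2)\<bar>"
    by (simp add: sin_diff_sin abs_mult)
  have a: "\<bar>sin ((x-y)/2)\<bar> \<le> \<bar>x-y\<bar>/2" using abs_sin_x_le_abs_x[of "(x-y)/2"] by (simp add: abs_divide)
  have b: "\<bar>cos ((x+y)/2)\<bar> \<le> 1" by simp
  have "\<bar>sin ((x - y) / 2)\<bar> * \<bar>cos ((x + y) / 2)\<bar> \<le> (\<bar>x-y\<bar>/2) * 1"
    by (rule mult_mono[OF a b]) auto
  then show ?thesis unfolding e by (simp add: mult.assoc)
qed

lemma sign_lemma0:
  fixes f f' r :: "real \<Rightarrow> real"
  assumes d1: "\<And>x. (f has_real_derivative f' x) (at x)"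
    and d2: "\<And>x. (f' has_real_derivative (r x - f x)) (at x)"
    and z: "f s = 0" "f' s = 0" and st: "s \<noteq> t" "\<bar>t - s\<bar> < pi/2"
    and r: "\<And>u. btw s t u \<Longrightarrow> r u > 0"
  shows "f t > 0 \<and> (t - s) * f' t > 0"
proof -
  define H where "H u = f u * cos (t - u) + f' u * sin (t - u)" for u
  define K where "K u = f' u * cos (t - u) - f u * sin (t - u)" for u
  have dH: "(H has_real_derivative r u * sin (t - u)) (at u)" for u
    unfolding H_def
    by (auto intro!: derivative_eq_intros d1 d2 simp: algebra_simps)
  have dK: "(K has_real_derivative r u * cos (t - u)) (at u)" for u
    unfolding K_def
    by (auto intro!: derivative_eq_intros d1 d2 simp: algebra_simps)
  have Hs: "H s = 0" "K s = 0" using z by (simp_all add: H_def K_def)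
  have Ht: "H t = f t" "K t = f' t" by (simp_all add: H_def K_def)
  show ?thesis
  proof (cases "s < t")
    case True
    have "H s < H t"
    proof (rule incr_from_deriv[OF dH True])
      fix u assume u: "s < u" "u < t"
      then have "r u > 0" using r by (auto simp: btw_def)
      moreover have "sin (t - u) > 0" using u st by (intro sin_gt_zero) auto
      ultimately show "r u * sin (t - u) > 0" by simp
    qed
    moreover have "K s < K t"
    proof (rule incr_from_deriv[OF dK True])
      fix u assume u: "s < u" "u < t"
      then have "r u > 0" using r by (auto simp: btw_def)
      moreover have "cos (t - u) > 0" using u st by (intro cos_gt_zero) auto
      ultimately show "r u * cos (t - u) > 0" by simp
    qed
    ultimately show ?thesis using Hs Ht True by simp
  next
    case False
    then have ts: "t < s" using st by simp
    have dH': "((\<lambda>x. - H x) has_real_derivative - (r u * sin (t - u))) (at u)" for u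
      using dH[of u] by (intro derivative_intros)
    have "(\<lambda>x. - H x) t < (\<lambda>x. - H x) s"
    proof (rule incr_from_deriv[OF dH' ts])
      fix u assume u: "t < u" "u < s"
      then have "r u > 0" using r by (auto simp: btw_def)
      moreover have "sin (u - t) > 0" using u st by (intro sin_gt_zero) auto
      ultimately show "- (r u * sin (t - u)) > 0" using sin_minus[of "u - t"] by (simp add: mult_pos_pos)
    qed
    then have "- H t < - H s" by simp
    moreover have "K t < K s"
    proof (rule incr_from_deriv[OF dK ts])
      fix u assume u: "t < u" "u < s"
      then have "r u > 0" using r by (auto simp: btw_def)
      moreover have "cos (t - u) > 0" using u st by (intro cos_gt_zero_pi) auto
      ultimately show "r u * cos (t - u) > 0" by simp
    qed
    ultimately show ?thesis using Hs Ht ts by (simp add: mult_neg_neg)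
  qed
qed

lemma sign_lemma:
  fixes f f' r :: "real \<Rightarrow> real"
  assumes d1: "\<And>x. (f has_real_derivative f' x) (at x)"
    and d2: "\<And>x. (f' has_real_derivative (r x - f x)) (at x)"
    and z: "f s = 0" "f' s = 0" and st: "s \<noteq> t" "\<bar>t - s\<bar> < pi/2"
    and sg: "\<sigma> = 1 \<or> \<sigma> = -1"
    and r: "\<And>u. btw s t u \<Longrightarrow> \<sigma> * r u > 0"
  shows "\<sigma> * f t > 0 \<and> \<sigma> * ((t - s) * f' t) > 0"
proof -
  have "(\<lambda>x. \<sigma> * f x) t > 0 \<and> (t - s) * (\<lambda>x. \<sigma> * f' x) t > 0"
  proof (rule sign_lemma0[where r = "\<lambda>x. \<sigma> * r x"])
    show "((\<lambda>x. \<sigma> * f x) has_real_derivative \<sigma> * f' x) (at x)" for x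
      by (rule DERIV_cmult[OF d1])
    show "((\<lambda>x. \<sigma> * f' x) has_real_derivative \<sigma> * r x - \<sigma> * f x) (at x)" for x
      using DERIV_cmult[OF d2[of x], of \<sigma>] by (simp add: algebra_simps)
  qed (use z st r in auto)
  then show ?thesis by (simp add: algebra_simps)
qed

lemma const_sign:
  fixes f :: "real \<Rightarrow> real"
  assumes c: "continuous_on {a<..<b} f" and nz: "\<And>x. a < x \<Longrightarrow> x < b \<Longrightarrow> f x \<noteq> 0"
  shows "\<exists>\<sigma>. (\<sigma> = 1 \<or> \<sigma> = -1) \<and> (\<forall>x. a < x \<and> x < b \<longrightarrow> \<sigma> * f x > 0)"
proof (cases "\<exists>x. a < x \<and> x < b \<and> f x < 0")
  case False
  then have "\<forall>x. a < x \<and> x < b \<longrightarrow> 1 * f x > 0" using nz by force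
  then show ?thesis by blast
next
  case True
  then obtain x0 where x0: "a < x0" "x0 < b" "f x0 < 0" by blast
  have "\<forall>x. a < x \<and> x < b \<longrightarrow> (-1) * f x > 0"
  proof (intro allI impI)
    fix x assume x: "a < x \<and> x < b"
    show "(-1) * f x > 0"
    proof (rule ccontr)
      assume "\<not> (-1) * f x > 0"
      then have fx: "f x > 0" using nz x by force
      have cc: "continuous_on {min x x0..max x x0} f"
        by (rule continuous_on_subset[OF c]) (use x x0 in auto)
      show False
      proof (cases "x \<le> x0")
        case True
        then obtain z where "x \<le> z" "z \<le> x0" "f z = 0"
          using IVT2'[of f x0 0 x] cc fx x0 True by (auto simp: min_def max_def)
        then show False using nz x x0 by force
      next
        case False
        then obtain z where "x0 \<le> z" "z \<le> x" "f z = 0"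
          using IVT'[of f x0 0 x] cc fx x0 by (auto simp: min_def max_def)
        then show False using nz x x0 by force
      qed
    qed
  qed
  then show ?thesis by blast
qed

lemma gmvt_any:
  fixes f g f' g' :: "real \<Rightarrow> real"
  assumes df: "\<And>x. (f has_real_derivative f' x) (at x)"
    and dg: "\<And>x. (g has_real_derivative g' x) (at x)" and "a \<noteq> b"
  shows "\<exists>c. btw a b c \<and> (f b - f a) * g' c = (g b - g a) * f' c"
proof (cases "a < b")
  case True
  from GMVT'[OF True, of f g g' f'] df dg obtain c where
    "a < c" "c < b" "(f b - f a) * g' c = (g b - g a) * f' c"
    by (auto intro: DERIV_isCont)
  then show ?thesis using True by (auto simp: btw_def)
next
  case False
  then have ba: "b < a" using assms by simp
  from GMVT'[OF ba, of f g g' f'] df dg obtain c where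
    "b < c" "c < a" "(f a - f b) * g' c = (g a - g b) * f' c"
    by (auto intro: DERIV_isCont)
  then show ?thesis using ba by (auto simp: btw_def algebra_simps)
qed

lemma tp_deriv: "(tp c \<alpha> \<beta> M has_real_derivative tp 0 (\<lambda>k. real k * \<beta> k) (\<lambda>k. -(real k * \<alpha> k)) M t) (at t)"
  unfolding tp_def[abs_def]
  by (auto intro!: derivative_eq_intros sum.cong simp: algebra_simps)

lemma tp_shift_pi: "tp c \<alpha> \<beta> M (t + pi) = tp c (\<lambda>k. (-1)^k * \<alpha> k) (\<lambda>k. (-1)^k * \<beta> k) M t"
proof -
  have "real k * (t + pi) = real k * t + real k * pi" for k by (simp add: algebra_simps)
  then show ?thesis unfolding tp_def by (simp add: cos_add sin_add mult_ac)
qed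

lemma tp_period: "tp c \<alpha> \<beta> M (t + 2*pi) = tp c \<alpha> \<beta> M t"
proof -
  have "tp c \<alpha> \<beta> M (t + 2*pi) = tp c \<alpha> \<beta> M ((t + pi) + pi)" by (simp add: algebra_simps)
  also have "\<dots> = tp c (\<lambda>k. (-1)^k * ((-1)^k * \<alpha> k)) (\<lambda>k. (-1)^k * ((-1)^k * \<beta> k)) M t"
    by (simp only: tp_shift_pi)
  also have "\<dots> = tp c \<alpha> \<beta> M t"
    by (simp add: mult.assoc[symmetric] power_mult_distrib[symmetric])
  finally show ?thesis .
qed

lemma tp_add: "tp c \<alpha> \<beta> M t + tp c' \<alpha>' \<beta>' M t = tp (c+c') (\<lambda>k. \<alpha> k + \<alpha>' k) (\<lambda>k. \<beta> k + \<beta>' k) M t"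
  unfolding tp_def by (simp add: sum.distrib algebra_simps)

lemma tp_cont: "continuous_on S (tp c \<alpha> \<beta> M)"
  by (rule deriv_cont_on[OF tp_deriv])

lemma tp_isolated:
  assumes "\<not> (c = 0 \<and> (\<forall>k\<in>{1..M}. \<alpha> k = 0 \<and> \<beta> k = 0))"
  shows "\<exists>\<epsilon>>0. \<forall>t. t \<noteq> x \<and> \<bar>t - x\<bar> < \<epsilon> \<longrightarrow> tp c \<alpha> \<beta> M t \<noteq> 0"
proof -
  let ?S = "{t. x - 1 < t \<and> t < x + 1 \<and> tp c \<alpha> \<beta> M t = 0}"
  obtain d where d: "d > 0" "\<forall>t\<in>?S. t \<noteq> x \<longrightarrow> d \<le> dist x t"
    using finite_set_avoid[OF tp_zeros_finite[OF assms, of x], of x] by blast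
  show ?thesis
  proof (intro exI[of _ "min d 1"] conjI allI impI)
    fix t assume t: "t \<noteq> x \<and> \<bar>t - x\<bar> < min d 1"
    show "tp c \<alpha> \<beta> M t \<noteq> 0"
    proof
      assume "tp c \<alpha> \<beta> M t = 0"
      then have "t \<in> ?S" using t by auto
      then show False using d t by (auto simp: dist_real_def)
    qed
  qed (use d in auto)
qed

locale hedge =
  fixes a b :: "nat \<Rightarrow> real" and N :: nat
  assumes N2: "N \<ge> 2" and lead: "a N \<noteq> 0 \<or> b N \<noteq> 0"
begin

definition "p = tp (a 0) a b N"
definition "dp = tp 0 (\<lambda>k. real k * b k) (\<lambda>k. -(real k * a k)) N"
definition "ddp = tp 0 (\<lambda>k. real k * (-(real k * a k))) (\<lambda>k. -(real k * (real k * b k))) N"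
definition "rho t = p t + ddp t"
definition "g1 t = p t * cos t - dp t * sin t"
definition "g2 t = p t * sin t + dp t * cos t"
definition "gam t = (g1 t, g2 t)"
definition "D Y t = p t - (fst Y * cos t + snd Y * sin t)"
definition "Dd Y t = dp t + fst Y * sin t - snd Y * cos t"
definition "q t = p t + p (t + pi)"

lemma dp_deriv: "(p has_real_derivative dp t) (at t)"
  unfolding p_def dp_def by (rule tp_deriv)

lemma ddp_deriv: "(dp has_real_derivative ddp t) (at t)"
  unfolding ddp_def dp_def by (rule tp_deriv)

lemma trig_poly_eq: "trig_poly a b N = p"
  by (auto simp: trig_poly_def p_def tp_def)

lemma gamma_eq: "gamma_curve (trig_poly a b N) = gam"
proof -
  have "deriv p = dp" using dp_deriv DERIV_imp_deriv by blast
  then show ?thesis by (auto simp: trig_poly_eq gamma_curve_def gam_def g1_def g2_def)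
qed

lemma rho_tp: "rho t = tp (a 0) (\<lambda>k. a k + real k * (-(real k * a k))) (\<lambda>k. b k + -(real k * (real k * b k))) N t"
  unfolding rho_def p_def ddp_def tp_add by simp

lemma g1_deriv: "(g1 has_real_derivative -(rho t * sin t)) (at t)"
  unfolding g1_def[abs_def]
  by (auto intro!: derivative_eq_intros dp_deriv ddp_deriv simp: rho_def algebra_simps)

lemma g2_deriv: "(g2 has_real_derivative rho t * cos t) (at t)"
  unfolding g2_def[abs_def]
  by (auto intro!: derivative_eq_intros dp_deriv ddp_deriv simp: rho_def algebra_simps)

lemma D_deriv: "(D Y has_real_derivative Dd Y t) (at t)"
  unfolding D_def[abs_def] Dd_def
  by (auto intro!: derivative_eq_intros dp_deriv ddp_deriv simp: algebra_simps)

lemma Dd_deriv: "(Dd Y has_real_derivative rho t - D Y t) (at t)"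
  unfolding Dd_def[abs_def] D_def
  by (auto intro!: derivative_eq_intros dp_deriv ddp_deriv simp: rho_def algebra_simps)

lemma rho_cont: "continuous_on S rho"
  unfolding rho_tp[abs_def] by (rule tp_cont)

lemma rho_isolated: "\<exists>\<epsilon>>0. \<forall>t. t \<noteq> x \<and> \<bar>t - x\<bar> < \<epsilon> \<longrightarrow> rho t \<noteq> 0"
proof -
  have N1: "N \<in> {1..N}" using N2 by auto
  have "real N \<ge> 2" using N2 by simp
  then have "real N * real N \<ge> 2 * 2" by (intro mult_mono) auto
  then have "1 - real N * real N \<noteq> 0" by linarith
  then have "a N + real N * (-(real N * a N)) \<noteq> 0 \<or> b N + -(real N * (real N * b N)) \<noteq> 0"
    using lead by (auto simp: algebra_simps)
  then have nz: "\<not> (a 0 = 0 \<and> (\<forall>k\<in>{1..N}. a k + real k * (-(real k * a k)) = 0 \<and> b k + -(real k * (real k * b k)) = 0))"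
    using N1 by blast
  show ?thesis using tp_isolated[OF nz, of x] by (simp add: rho_tp)
qed

lemma p_period: "p (t + 2*pi) = p t" and dp_period: "dp (t + 2*pi) = dp t"
  unfolding p_def dp_def by (rule tp_period)+

lemma gam_period: "gam (t + 2*pi) = gam t"
  by (simp add: gam_def g1_def g2_def p_period dp_period)

lemma gam_period': "gam (t - 2*pi) = gam t"
  using gam_period[of "t - 2*pi"] by simp

lemma gam_iff: "gam t = Y \<longleftrightarrow> D Y t = 0 \<and> Dd Y t = 0"
proof
  assume "gam t = Y"
  then have Y: "Y = (g1 t, g2 t)" by (simp add: gam_def)
  have s: "sin t * sin t + cos t * cos t = 1" using sin_cos_squared_add[of t] by (simp add: power2_eq_square)
  show "D Y t = 0 \<and> Dd Y t = 0"
    unfolding Y D_def Dd_def g1_def g2_def fst_conv snd_conv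
  proof
    have "(p t * cos t - dp t * sin t) * cos t + (p t * sin t + dp t * cos t) * sin t
        = p t * (sin t * sin t + cos t * cos t)" by algebra
    then have "(p t * cos t - dp t * sin t) * cos t + (p t * sin t + dp t * cos t) * sin t
        = p t" by (simp only: s mult_1_right)
    then show "p t - ((p t * cos t - dp t * sin t) * cos t + (p t * sin t + dp t * cos t) * sin t) = 0"
      using s by simp
    have "(p t * cos t - dp t * sin t) * sin t - (p t * sin t + dp t * cos t) * cos t
        = - dp t * (sin t * sin t + cos t * cos t)" by algebra
    then have "(p t * cos t - dp t * sin t) * sin t - (p t * sin t + dp t * cos t) * cos t
        = - dp t" by (simp only: s mult_1_right)
    then show "dp t + (p t * cos t - dp t * sin t) * sin t - (p t * sin t + dp t * cos t) * cos t = 0"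
      using s by simp
  qed
next
  assume "D Y t = 0 \<and> Dd Y t = 0"
  then have e1: "p t = fst Y * cos t + snd Y * sin t" and e2: "dp t = snd Y * cos t - fst Y * sin t"
    by (auto simp: D_def Dd_def)
  have s: "sin t * sin t + cos t * cos t = 1" using sin_cos_squared_add[of t] by (simp add: power2_eq_square)
  have "g1 t = fst Y * (sin t * sin t + cos t * cos t)" unfolding g1_def e1 e2 by algebra
  moreover have "g2 t = snd Y * (sin t * sin t + cos t * cos t)" unfolding g2_def e1 e2 by algebra
  ultimately show "gam t = Y" by (simp only: s mult_1_right gam_def prod_eq_iff) simp
qed

lemma q_tp: "q t = tp (a 0 + a 0) (\<lambda>k. a k + (-1)^k * a k) (\<lambda>k. b k + (-1)^k * b k) N t"
  unfolding q_def p_def tp_shift_pi tp_add by simp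

lemma q_cont: "continuous_on S q"
  unfolding q_tp[abs_def] by (rule tp_cont)

lemma D_pi: "D Y t + D Y (t + pi) = q t"
  by (simp add: D_def q_def algebra_simps)

lemma Dd_pi: "Dd Y t + Dd Y (t + pi) = dp t + dp (t + pi)"
  by (simp add: Dd_def algebra_simps)

end

lemma incr_sign:
  fixes f :: "real \<Rightarrow> real"
  assumes d: "\<And>x. (f has_real_derivative f' x) (at x)" and "a < b"
    and pos: "\<And>x. a < x \<Longrightarrow> x < b \<Longrightarrow> \<sigma> * f' x > 0"
  shows "\<sigma> * f a < \<sigma> * f b"
  using incr_from_deriv[where f = "\<lambda>x. \<sigma> * f x" and f' = "\<lambda>x. \<sigma> * f' x"] DERIV_cmult[OF d] assms
  by blast

lemma same_sign_aux: "0 < a * w \<Longrightarrow> 0 < b * w \<Longrightarrow> 0 < a * (b::real)"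
  by (auto simp: zero_less_mult_iff)

lemma ivt_btw:
  fixes f :: "real \<Rightarrow> real"
  assumes c: "continuous_on UNIV f" and s: "f u * f v < 0"
  shows "\<exists>z. btw u v z \<and> f z = 0"
proof -
  have cc: "continuous_on {x..y} f" for x y using c by (rule continuous_on_subset) auto
  have uv: "u \<noteq> v" using s by auto
  have "\<exists>z. min u v \<le> z \<and> z \<le> max u v \<and> f z = 0"
  proof (cases "f u < 0")
    case True
    then have "f v > 0" using s by (simp add: mult_less_0_iff)
    show ?thesis
    proof (cases "u \<le> v")
      case True
      then show ?thesis using IVT'[of f u 0 v, OF _ _ True cc] \<open>f u < 0\<close> \<open>f v > 0\<close> by auto
    next
      case False
      then show ?thesis using IVT2'[of f u 0 v, OF _ _ _ cc] \<open>f u < 0\<close> \<open>f v > 0\<close> by auto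
    qed
  next
    case False
    then have fu: "f u > 0" "f v < 0" using s by (auto simp: mult_less_0_iff)
    show ?thesis
    proof (cases "u \<le> v")
      case True
      then show ?thesis using IVT2'[of f v 0 u, OF _ _ True cc] fu by auto
    next
      case False
      then show ?thesis using IVT'[of f v 0 u, OF _ _ _ cc] fu by auto
    qed
  qed
  then obtain z where z: "min u v \<le> z" "z \<le> max u v" "f z = 0" by blast
  then have "z \<noteq> u" "z \<noteq> v" using s by auto
  then have "btw u v z" using z by (auto simp: btw_def min_def max_def)
  then show ?thesis using z(3) by blast
qed

context hedge
begin

definition "Fc c t = g1 t * cos c + g2 t * sin c"
definition "Gc c t = - g1 t * sin c + g2 t * cos c"

lemma Fc_deriv: "(Fc c has_real_derivative - (rho t * sin (t - c))) (at t)"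
  unfolding Fc_def[abs_def]
  by (auto intro!: derivative_eq_intros g1_deriv g2_deriv simp: sin_diff algebra_simps)

lemma Gc_deriv: "(Gc c has_real_derivative rho t * cos (t - c)) (at t)"
  unfolding Gc_def[abs_def]
  by (auto intro!: derivative_eq_intros g1_deriv g2_deriv simp: cos_diff algebra_simps)

lemma local_inj_aux:
  assumes th: "\<theta> < \<phi>" "\<bar>\<theta> - x0\<bar> < \<epsilon>" "\<bar>\<phi> - x0\<bar> < \<epsilon>" "\<epsilon> \<le> pi/4"
    and nz: "\<And>t. t \<noteq> x0 \<Longrightarrow> \<bar>t - x0\<bar> < \<epsilon> \<Longrightarrow> rho t \<noteq> 0"
  shows "gam \<theta> \<noteq> gam \<phi>"
proof
  assume eq: "gam \<theta> = gam \<phi>"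
  then have eqF: "Fc x0 \<theta> = Fc x0 \<phi>" and eqG: "Gc x0 \<theta> = Gc x0 \<phi>"
    by (auto simp: gam_def Fc_def Gc_def)
  have cospos: "cos (t - x0) > 0" if "\<bar>t - x0\<bar> < \<epsilon>" for t
    using that th(4) by (intro cos_gt_zero_pi) auto
  have rc: "continuous_on S rho" for S by (rule rho_cont)
  show False
  proof (cases "\<theta> < x0 \<and> x0 < \<phi>")
    case False
    have "\<exists>\<sigma>. (\<sigma> = 1 \<or> \<sigma> = -1) \<and> (\<forall>x. \<theta> < x \<and> x < \<phi> \<longrightarrow> \<sigma> * rho x > 0)"
      by (rule const_sign[OF rc], rule nz) (use False th in auto)
    then obtain \<sigma> where s: "\<sigma> = 1 \<or> \<sigma> = -1" "\<And>x. \<theta> < x \<Longrightarrow> x < \<phi> \<Longrightarrow> \<sigma> * rho x > 0" by blast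
    have "\<sigma> * Gc x0 \<theta> < \<sigma> * Gc x0 \<phi>"
    proof (rule incr_sign[OF Gc_deriv th(1)])
      fix x assume x: "\<theta> < x" "x < \<phi>"
      then have "\<bar>x - x0\<bar> < \<epsilon>" using th by auto
      then have "cos (x - x0) > 0" by (rule cospos)
      with s(2)[OF x] show "\<sigma> * (rho x * cos (x - x0)) > 0" by (simp add: mult.assoc[symmetric])
    qed
    then show False using eqG by simp
  next
    case True
    have "\<exists>\<sigma>. (\<sigma> = 1 \<or> \<sigma> = -1) \<and> (\<forall>x. \<theta> < x \<and> x < x0 \<longrightarrow> \<sigma> * rho x > 0)"
      by (rule const_sign[OF rc], rule nz) (use True th in auto)
    then obtain \<sigma>1 where s1: "\<sigma>1 = 1 \<or> \<sigma>1 = -1" "\<And>x. \<theta> < x \<Longrightarrow> x < x0 \<Longrightarrow> \<sigma>1 * rho x > 0" by blast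
    have "\<exists>\<sigma>. (\<sigma> = 1 \<or> \<sigma> = -1) \<and> (\<forall>x. x0 < x \<and> x < \<phi> \<longrightarrow> \<sigma> * rho x > 0)"
      by (rule const_sign[OF rc], rule nz) (use True th in auto)
    then obtain \<sigma>2 where s2: "\<sigma>2 = 1 \<or> \<sigma>2 = -1" "\<And>x. x0 < x \<Longrightarrow> x < \<phi> \<Longrightarrow> \<sigma>2 * rho x > 0" by blast
    show False
    proof (cases "\<sigma>1 = \<sigma>2")
      case True
      have "\<sigma>1 * Gc x0 \<theta> < \<sigma>1 * Gc x0 x0"
      proof (rule incr_sign[OF Gc_deriv])
        show "\<theta> < x0" using \<open>\<theta> < x0 \<and> x0 < \<phi>\<close> by simp
        fix x assume x: "\<theta> < x" "x < x0"
        then have "\<bar>x - x0\<bar> < \<epsilon>" using th by auto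
        then have "cos (x - x0) > 0" by (rule cospos)
        with s1(2)[OF x] show "\<sigma>1 * (rho x * cos (x - x0)) > 0" by (simp add: mult.assoc[symmetric])
      qed
      moreover have "\<sigma>1 * Gc x0 x0 < \<sigma>1 * Gc x0 \<phi>"
      proof (rule incr_sign[OF Gc_deriv])
        show "x0 < \<phi>" using \<open>\<theta> < x0 \<and> x0 < \<phi>\<close> by simp
        fix x assume x: "x0 < x" "x < \<phi>"
        then have "\<bar>x - x0\<bar> < \<epsilon>" using th by auto
        then have "cos (x - x0) > 0" by (rule cospos)
        with s2(2)[OF x] True show "\<sigma>1 * (rho x * cos (x - x0)) > 0" by (simp add: mult.assoc[symmetric])
      qed
      ultimately show False using eqG by simp
    next
      case False
      then have s21: "\<sigma>2 = - \<sigma>1" using s1(1) s2(1) by auto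
      have "\<sigma>1 * Fc x0 \<theta> < \<sigma>1 * Fc x0 x0"
      proof (rule incr_sign[OF Fc_deriv])
        show "\<theta> < x0" using \<open>\<theta> < x0 \<and> x0 < \<phi>\<close> by simp
        fix x assume x: "\<theta> < x" "x < x0"
        then have "\<bar>x - x0\<bar> < \<epsilon>" using th by auto
        have "sin (x0 - x) > 0" using x th by (intro sin_gt_zero) auto
        then have "- sin (x - x0) > 0" using sin_minus[of "x0 - x"] by simp
        with s1(2)[OF x] have "(\<sigma>1 * rho x) * (- sin (x - x0)) > 0" by (rule mult_pos_pos)
        then show "\<sigma>1 * - (rho x * sin (x - x0)) > 0" by (simp add: algebra_simps)
      qed
      moreover have "\<sigma>1 * Fc x0 x0 < \<sigma>1 * Fc x0 \<phi>"
      proof (rule incr_sign[OF Fc_deriv])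
        show "x0 < \<phi>" using \<open>\<theta> < x0 \<and> x0 < \<phi>\<close> by simp
        fix x assume x: "x0 < x" "x < \<phi>"
        have "sin (x - x0) > 0" using x th by (intro sin_gt_zero) auto
        with s2(2)[OF x] have "(\<sigma>2 * rho x) * sin (x - x0) > 0" by (rule mult_pos_pos)
        then show "\<sigma>1 * - (rho x * sin (x - x0)) > 0" using s21 by (simp add: algebra_simps)
      qed
      ultimately show False using eqF by simp
    qed
  qed
qed

lemma local_inj: "\<exists>\<epsilon>>0. \<epsilon> \<le> pi/4 \<and> (\<forall>\<theta> \<phi>. \<bar>\<theta> - x0\<bar> < \<epsilon> \<longrightarrow> \<bar>\<phi> - x0\<bar> < \<epsilon> \<longrightarrow> gam \<theta> = gam \<phi> \<longrightarrow> \<theta> = \<phi>)"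
proof -
  obtain e0 where e0: "e0 > 0" "\<forall>t. t \<noteq> x0 \<and> \<bar>t - x0\<bar> < e0 \<longrightarrow> rho t \<noteq> 0"
    using rho_isolated[of x0] by blast
  define e where "e = min e0 (pi/4)"
  have e: "e > 0" "e \<le> pi/4" using e0 by (auto simp: e_def)
  have nz: "\<And>t. t \<noteq> x0 \<Longrightarrow> \<bar>t - x0\<bar> < e \<Longrightarrow> rho t \<noteq> 0" using e0 by (auto simp: e_def)
  show ?thesis
  proof (intro exI[of _ e] conjI e allI impI)
    fix \<theta> \<phi> assume h: "\<bar>\<theta> - x0\<bar> < e" "\<bar>\<phi> - x0\<bar> < e" "gam \<theta> = gam \<phi>"
    show "\<theta> = \<phi>"
    proof (rule ccontr)
      assume "\<theta> \<noteq> \<phi>"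
      then consider "\<theta> < \<phi>" | "\<phi> < \<theta>" by linarith
      then show False
      proof cases
        case 1 then show False using local_inj_aux[OF 1 h(1,2) e(2) nz] h(3) by blast
      next
        case 2 then show False using local_inj_aux[OF 2 h(2,1) e(2) nz] h(3) by metis
      qed
    qed
  qed
qed

lemma orth_from_mvt:
  assumes "x \<noteq> y" "\<And>t. btw x y t \<Longrightarrow> rho t \<noteq> 0"
  shows "\<exists>a. btw x y a \<and> (g1 y - g1 x) * cos a + (g2 y - g2 x) * sin a = 0"
proof -
  obtain a where a: "btw x y a" "(g1 y - g1 x) * (rho a * cos a) = (g2 y - g2 x) * (- (rho a * sin a))"
    using gmvt_any[OF g1_deriv g2_deriv assms(1)] by blast
  have "rho a * ((g1 y - g1 x) * cos a + (g2 y - g2 x) * sin a) = 0"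
    using a(2) by (simp add: algebra_simps)
  then show ?thesis using a(1) assms(2)[OF a(1)] by auto
qed

lemma chord:
  assumes sn: "sin (\<phi>0 - x0) \<noteq> 0" and eq0: "gam x0 = gam \<phi>0"
  shows "\<exists>\<epsilon>>0. \<forall>\<theta> \<phi>. \<bar>\<theta> - x0\<bar> < \<epsilon> \<longrightarrow> \<bar>\<phi> - \<phi>0\<bar> < \<epsilon> \<longrightarrow> gam \<theta> = gam \<phi> \<longrightarrow> \<theta> = x0"
proof -
  obtain e1 where e1: "e1 > 0" "\<forall>\<theta> \<phi>. \<bar>\<theta> - x0\<bar> < e1 \<longrightarrow> \<bar>\<phi> - x0\<bar> < e1 \<longrightarrow> gam \<theta> = gam \<phi> \<longrightarrow> \<theta> = \<phi>"
    using local_inj[of x0] by blast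
  obtain e2 where e2: "e2 > 0" "\<forall>t. t \<noteq> x0 \<and> \<bar>t - x0\<bar> < e2 \<longrightarrow> rho t \<noteq> 0"
    using rho_isolated[of x0] by blast
  obtain e3 where e3: "e3 > 0" "\<forall>t. t \<noteq> \<phi>0 \<and> \<bar>t - \<phi>0\<bar> < e3 \<longrightarrow> rho t \<noteq> 0"
    using rho_isolated[of \<phi>0] by blast
  define e where "e = min (min e1 e2) (min e3 (\<bar>sin (\<phi>0 - x0)\<bar> / 2))"
  have e: "e > 0" "e \<le> e1" "e \<le> e2" "e \<le> e3" "2 * e \<le> \<bar>sin (\<phi>0 - x0)\<bar>"
    using e1 e2 e3 sn by (auto simp: e_def)
  show ?thesis
  proof (intro exI[of _ e] conjI e(1) allI impI)
    fix \<theta> \<phi> assume h: "\<bar>\<theta> - x0\<bar> < e" "\<bar>\<phi> - \<phi>0\<bar> < e" "gam \<theta> = gam \<phi>"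
    show "\<theta> = x0"
    proof (rule ccontr)
      assume ne: "\<theta> \<noteq> x0"
      have gne: "gam \<theta> \<noteq> gam x0" using e1(2) h(1) e ne by force
      then have "\<phi> \<noteq> \<phi>0" using h(3) eq0 by auto
      define c1 where "c1 = g1 \<theta> - g1 x0"
      define c2 where "c2 = g2 \<theta> - g2 x0"
      have c': "g1 \<phi> - g1 \<phi>0 = c1" "g2 \<phi> - g2 \<phi>0 = c2"
        using h(3) eq0 by (auto simp: c1_def c2_def gam_def)
      have "\<exists>a. btw x0 \<theta> a \<and> (g1 \<theta> - g1 x0) * cos a + (g2 \<theta> - g2 x0) * sin a = 0"
      proof (rule orth_from_mvt)
        show "x0 \<noteq> \<theta>" using ne by simp
        fix t assume "btw x0 \<theta> t"
        then have "t \<noteq> x0 \<and> \<bar>t - x0\<bar> < e2" using h(1) e by (auto simp: btw_def)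
        then show "rho t \<noteq> 0" using e2 by blast
      qed
      then obtain a where a: "btw x0 \<theta> a" "c1 * cos a + c2 * sin a = 0"
        unfolding c1_def c2_def by blast
      have "\<exists>b. btw \<phi>0 \<phi> b \<and> (g1 \<phi> - g1 \<phi>0) * cos b + (g2 \<phi> - g2 \<phi>0) * sin b = 0"
      proof (rule orth_from_mvt)
        show "\<phi>0 \<noteq> \<phi>" using \<open>\<phi> \<noteq> \<phi>0\<close> by simp
        fix t assume "btw \<phi>0 \<phi> t"
        then have "t \<noteq> \<phi>0 \<and> \<bar>t - \<phi>0\<bar> < e3" using h(2) e by (auto simp: btw_def)
        then show "rho t \<noteq> 0" using e3 by blast
      qed
      then obtain b where b: "btw \<phi>0 \<phi> b" "c1 * cos b + c2 * sin b = 0"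
        unfolding c' by blast
      have "\<bar>(b - a) - (\<phi>0 - x0)\<bar> < 2 * e" using a(1) b(1) h(1,2) by (auto simp: btw_def)
      then have "\<bar>sin (b - a) - sin (\<phi>0 - x0)\<bar> < \<bar>sin (\<phi>0 - x0)\<bar>"
        using sin_lip[of "b - a" "\<phi>0 - x0"] e(5) by linarith
      then have sba: "sin (b - a) \<noteq> 0" by auto
      have ca: "c1 * cos a = - (c2 * sin a)" and cb: "c1 * cos b = - (c2 * sin b)"
        using a(2) b(2) by (simp_all add: eq_neg_iff_add_eq_0)
      have sa: "c2 * sin a = - (c1 * cos a)" and sb: "c2 * sin b = - (c1 * cos b)"
        using a(2) b(2) by (simp_all add: eq_neg_iff_add_eq_0 add.commute)
      have "c1 * sin (b - a) = sin b * (c1 * cos a) - sin a * (c1 * cos b)"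
        by (simp add: sin_diff algebra_simps)
      also have "\<dots> = sin b * (- (c2 * sin a)) - sin a * (- (c2 * sin b))"
        by (simp only: ca cb)
      also have "\<dots> = 0" by algebra
      finally have "c1 = 0" using sba by simp
      have "c2 * sin (b - a) = cos a * (c2 * sin b) - cos b * (c2 * sin a)"
        by (simp add: sin_diff algebra_simps)
      also have "\<dots> = cos a * (- (c1 * cos b)) - cos b * (- (c1 * cos a))"
        by (simp only: sa sb)
      also have "\<dots> = 0" by algebra
      finally have "c2 = 0" using sba by simp
      with \<open>c1 = 0\<close> gne show False by (simp add: c1_def c2_def gam_def)
    qed
  qed
qed

lemma rho_pi_cont: "continuous_on S (\<lambda>t. rho (t + pi))"
  by (rule continuous_on_compose2[OF rho_cont[of UNIV]]) (auto intro!: continuous_intros)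

lemma Dpi_deriv: "((\<lambda>t. D Y (t + pi)) has_real_derivative Dd Y (x + pi)) (at x)"
  using D_deriv[of Y "x + pi"] by (simp add: DERIV_shift)

lemma Ddpi_deriv: "((\<lambda>t. Dd Y (t + pi)) has_real_derivative rho (x + pi) - D Y (x + pi)) (at x)"
  using Dd_deriv[of Y "x + pi"] by (simp add: DERIV_shift)

lemma side_sign:
  fixes f :: "real \<Rightarrow> real" and x0 e :: real
  assumes c: "continuous_on UNIV f" and e: "e > 0" and nz: "\<And>t. t \<noteq> x0 \<Longrightarrow> \<bar>t - x0\<bar> < e \<Longrightarrow> f t \<noteq> 0"
  shows "\<exists>sg. (\<forall>t. sg t = 1 \<or> sg t = -1) \<and>
     (\<forall>t u. t \<noteq> x0 \<longrightarrow> u \<noteq> x0 \<longrightarrow> \<bar>u - x0\<bar> < e \<longrightarrow> (t - x0) * (u - x0) > 0 \<longrightarrow> sg t * f u > 0)"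
proof -
  have cc: "continuous_on {x<..<y} f" for x y using c by (rule continuous_on_subset) auto
  obtain sp where sp: "sp = 1 \<or> sp = -1" "\<forall>x. x0 < x \<and> x < x0 + e \<longrightarrow> sp * f x > 0"
    using const_sign[OF cc[of x0 "x0 + e"]] nz by force
  obtain sm where sm: "sm = 1 \<or> sm = -1" "\<forall>x. x0 - e < x \<and> x < x0 \<longrightarrow> sm * f x > 0"
    using const_sign[OF cc[of "x0 - e" x0]] nz by force
  show ?thesis
  proof (intro exI[of _ "\<lambda>t. if t > x0 then sp else sm"] conjI allI impI)
    fix t show "(if t > x0 then sp else sm) = 1 \<or> (if t > x0 then sp else sm) = -1" using sp sm by auto
  next
    fix t u assume h: "t \<noteq> x0" "u \<noteq> x0" "\<bar>u - x0\<bar> < e" "(t - x0) * (u - x0) > 0"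
    then have "(t > x0 \<and> u > x0) \<or> (t < x0 \<and> u < x0)" by (auto simp: zero_less_mult_iff)
    then show "(if t > x0 then sp else sm) * f u > 0" using sp sm h by auto
  qed
qed

lemma pi_lemma:
  assumes qiso: "\<exists>e>0. \<forall>t. t \<noteq> x0 \<and> \<bar>t - x0\<bar> < e \<longrightarrow> q t \<noteq> 0"
    and X: "gam x0 = gam (x0 + pi)"
  shows "\<exists>\<epsilon>>0. \<forall>\<theta> \<psi>. \<bar>\<theta> - x0\<bar> < \<epsilon> \<longrightarrow> \<bar>\<psi> - x0\<bar> < \<epsilon> \<longrightarrow> gam \<theta> = gam (\<psi> + pi) \<longrightarrow> \<theta> = x0"
proof -
  obtain e1 where e1: "e1 > 0" "e1 \<le> pi/4" "\<forall>\<theta> \<phi>. \<bar>\<theta> - x0\<bar> < e1 \<longrightarrow> \<bar>\<phi> - x0\<bar> < e1 \<longrightarrow> gam \<theta> = gam \<phi> \<longrightarrow> \<theta> = \<phi>"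
    using local_inj[of x0] by blast
  obtain e2 where e2: "e2 > 0" "\<forall>t. t \<noteq> x0 \<and> \<bar>t - x0\<bar> < e2 \<longrightarrow> rho t \<noteq> 0"
    using rho_isolated[of x0] by blast
  obtain e3 where e3: "e3 > 0" "\<forall>t. t \<noteq> x0 + pi \<and> \<bar>t - (x0 + pi)\<bar> < e3 \<longrightarrow> rho t \<noteq> 0"
    using rho_isolated[of "x0 + pi"] by blast
  obtain e4 where e4: "e4 > 0" "\<forall>t. t \<noteq> x0 \<and> \<bar>t - x0\<bar> < e4 \<longrightarrow> q t \<noteq> 0"
    using qiso by blast
  define e where "e = min (min e1 e2) (min e3 e4)"
  have e: "e > 0" "e \<le> e1" "e \<le> e2" "e \<le> e3" "e \<le> e4" "e \<le> pi/4"
    using e1 e2 e3 e4 by (auto simp: e_def)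
  obtain sg where sg: "\<And>t. sg t = 1 \<or> sg t = -1"
    "\<And>t u. t \<noteq> x0 \<Longrightarrow> u \<noteq> x0 \<Longrightarrow> \<bar>u - x0\<bar> < e \<Longrightarrow> (t - x0) * (u - x0) > 0 \<Longrightarrow> sg t * rho u > 0"
    using side_sign[OF rho_cont e(1), of x0] e e2 by force
  obtain tg where tg: "\<And>t. tg t = 1 \<or> tg t = -1"
    "\<And>t u. t \<noteq> x0 \<Longrightarrow> u \<noteq> x0 \<Longrightarrow> \<bar>u - x0\<bar> < e \<Longrightarrow> (t - x0) * (u - x0) > 0 \<Longrightarrow> tg t * rho (u + pi) > 0"
  proof -
    have "\<And>t. t \<noteq> x0 \<Longrightarrow> \<bar>t - x0\<bar> < e \<Longrightarrow> rho (t + pi) \<noteq> 0"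
      using e e3 by auto
    then show ?thesis using side_sign[OF rho_pi_cont e(1), of x0] that by blast
  qed
  have qX: "q x0 = 0" and dX: "dp x0 + dp (x0 + pi) = 0"
  proof -
    have "D (gam x0) x0 = 0 \<and> Dd (gam x0) x0 = 0" using gam_iff[of x0 "gam x0"] by simp
    moreover have "D (gam x0) (x0 + pi) = 0 \<and> Dd (gam x0) (x0 + pi) = 0" using gam_iff[of "x0 + pi" "gam x0"] X by simp
    ultimately show "q x0 = 0" "dp x0 + dp (x0 + pi) = 0"
      using D_pi[of "gam x0" x0] Dd_pi[of "gam x0" x0] by auto
  qed
  show ?thesis
  proof (intro exI[of _ e] conjI e(1) allI impI)
    fix \<theta> \<psi> assume h: "\<bar>\<theta> - x0\<bar> < e" "\<bar>\<psi> - x0\<bar> < e" "gam \<theta> = gam (\<psi> + pi)"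
    show "\<theta> = x0"
    proof (rule ccontr)
      assume ne: "\<theta> \<noteq> x0"
      define P where "P = gam \<theta>"
      have zt: "D P \<theta> = 0" "Dd P \<theta> = 0" using gam_iff[of \<theta> P] P_def by auto
      have zp: "D P (\<psi> + pi) = 0" "Dd P (\<psi> + pi) = 0" using gam_iff[of "\<psi> + pi" P] P_def h(3) by auto
      have psne: "\<psi> \<noteq> x0"
      proof
        assume "\<psi> = x0"
        then have "gam \<theta> = gam x0" using h(3) X by simp
        then show False using e1(3) h(1) e ne by force
      qed
      have A: "D P x0 + D P (x0 + pi) = 0" using D_pi[of P x0] qX by simp
      have B: "Dd P x0 + Dd P (x0 + pi) = 0" using Dd_pi[of P x0] dX by simp
      have S1: "sg \<theta> * D P x0 > 0 \<and> sg \<theta> * ((x0 - \<theta>) * Dd P x0) > 0"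
      proof (rule sign_lemma[OF D_deriv Dd_deriv zt])
        show "\<theta> \<noteq> x0" by (rule ne)
        show "\<bar>x0 - \<theta>\<bar> < pi/2" using h(1) e by (auto simp: abs_minus_commute)
        show "sg \<theta> = 1 \<or> sg \<theta> = -1" by (rule sg(1))
        fix u assume "btw \<theta> x0 u"
        then show "sg \<theta> * rho u > 0" using h(1) ne
          by (intro sg(2)) (auto simp: btw_def zero_less_mult_iff)
      qed
      have S2: "tg \<psi> * D P (x0 + pi) > 0 \<and> tg \<psi> * ((x0 - \<psi>) * Dd P (x0 + pi)) > 0"
      proof (rule sign_lemma[where f = "\<lambda>t. D P (t + pi)" and f' = "\<lambda>t. Dd P (t + pi)"
            and r = "\<lambda>t. rho (t + pi)", OF Dpi_deriv Ddpi_deriv zp])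
        show "\<psi> \<noteq> x0" by (rule psne)
        show "\<bar>x0 - \<psi>\<bar> < pi/2" using h(2) e by (auto simp: abs_minus_commute)
        show "tg \<psi> = 1 \<or> tg \<psi> = -1" by (rule tg(1))
        fix u assume "btw \<psi> x0 u"
        then show "tg \<psi> * rho (u + pi) > 0" using h(2) psne
          by (intro tg(2)) (auto simp: btw_def zero_less_mult_iff)
      qed
      have sgeq: "tg \<psi> = - sg \<theta>"
      proof -
        have Dm: "D P (x0 + pi) = - D P x0" using A by linarith
        have "sg \<theta> * D P x0 > 0" "tg \<psi> * D P x0 < 0" using S1 S2 unfolding Dm by auto
        then show ?thesis using sg(1)[of \<theta>] tg(1)[of \<psi>] by auto
      qed
      have same: "(\<theta> - x0) * (\<psi> - x0) > 0"
      proof -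
        have "sg \<theta> * ((x0 - \<theta>) * Dd P x0) > 0" using S1 by simp
        moreover have "sg \<theta> * ((x0 - \<psi>) * Dd P x0) > 0"
        proof -
          have Ddm: "Dd P (x0 + pi) = - Dd P x0" using B by linarith
          have "tg \<psi> * ((x0 - \<psi>) * Dd P (x0 + pi)) > 0" using S2 by simp
          then show ?thesis unfolding Ddm sgeq by (simp add: algebra_simps)
        qed
        ultimately have "(x0 - \<theta>) * (sg \<theta> * Dd P x0) > 0" "(x0 - \<psi>) * (sg \<theta> * Dd P x0) > 0"
          by (simp_all add: algebra_simps)
        then have "0 < (x0 - \<theta>) * (x0 - \<psi>)" by (rule same_sign_aux)
        then show ?thesis by (simp add: algebra_simps)
      qed
      have sgs: "sg \<psi> = sg \<theta>" "tg \<theta> = tg \<psi>"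
      proof -
        define m where "m = (\<theta> + x0)/2"
        have m: "m \<noteq> x0" "\<bar>m - x0\<bar> < e" using ne h(1) by (auto simp: m_def)
        have mx: "m - x0 = (\<theta> - x0) / 2" by (simp add: m_def field_simps)
        have "(\<theta> - x0) * (\<theta> - x0) > 0" using ne by (auto simp: zero_less_mult_iff)
        then have m1: "(\<theta> - x0) * (m - x0) > 0" unfolding mx by simp
        have "0 < ((\<theta> - x0) * (\<psi> - x0)) * ((\<theta> - x0) * (m - x0))" using same m1 by (rule mult_pos_pos)
        then have "0 < ((\<psi> - x0) * (m - x0)) * ((\<theta> - x0) * (\<theta> - x0))" by (simp add: algebra_simps)
        then have m2: "(\<psi> - x0) * (m - x0) > 0" using \<open>(\<theta> - x0) * (\<theta> - x0) > 0\<close>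
          by (simp add: zero_less_mult_iff)
        have "sg \<theta> * rho m > 0" by (rule sg(2)[OF ne m(1,2) m1])
        moreover have "sg \<psi> * rho m > 0" by (rule sg(2)[OF psne m(1,2) m2])
        ultimately show "sg \<psi> = sg \<theta>" using sg(1)[of \<theta>] sg(1)[of \<psi>] by auto
        have "tg \<theta> * rho (m + pi) > 0" by (rule tg(2)[OF ne m(1,2) m1])
        moreover have "tg \<psi> * rho (m + pi) > 0" by (rule tg(2)[OF psne m(1,2) m2])
        ultimately show "tg \<theta> = tg \<psi>" using tg(1)[of \<theta>] tg(1)[of \<psi>] by auto
      qed
      have qt: "q \<theta> = D P (\<theta> + pi)" using D_pi[of P \<theta>] zt by simp
      have qp: "q \<psi> = D P \<psi>" using D_pi[of P \<psi>] zp by simp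
      show False
      proof (cases "\<theta> = \<psi>")
        case True
        then have "q \<theta> = 0" using qt zp by simp
        then show False using e4 h(1) e ne by force
      next
        case False
        have btwside: "u \<noteq> x0 \<and> \<bar>u - x0\<bar> < e \<and> (\<theta> - x0) * (u - x0) > 0" if "btw \<theta> \<psi> u" for u
          using that same h(1,2) by (auto simp: btw_def zero_less_mult_iff)
        have T1: "tg \<psi> * D P (\<theta> + pi) > 0 \<and> tg \<psi> * ((\<theta> - \<psi>) * Dd P (\<theta> + pi)) > 0"
        proof (rule sign_lemma[where f = "\<lambda>t. D P (t + pi)" and f' = "\<lambda>t. Dd P (t + pi)"
              and r = "\<lambda>t. rho (t + pi)", OF Dpi_deriv Ddpi_deriv zp])
          show "\<psi> \<noteq> \<theta>" using False by simp
          have "\<bar>\<theta> - \<psi>\<bar> < 2 * e" using h(1,2) unfolding abs_less_iff by auto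
          then show "\<bar>\<theta> - \<psi>\<bar> < pi/2" using e by linarith
          show "tg \<psi> = 1 \<or> tg \<psi> = -1" by (rule tg(1))
          fix u assume u: "btw \<psi> \<theta> u"
          then have "btw \<theta> \<psi> u" by (auto simp: btw_def)
          then have "u \<noteq> x0 \<and> \<bar>u - x0\<bar> < e \<and> (\<theta> - x0) * (u - x0) > 0" by (rule btwside)
          then show "tg \<psi> * rho (u + pi) > 0" using tg(2)[of \<theta> u] ne sgs by auto
        qed
        have T2: "sg \<theta> * D P \<psi> > 0 \<and> sg \<theta> * ((\<psi> - \<theta>) * Dd P \<psi>) > 0"
        proof (rule sign_lemma[OF D_deriv Dd_deriv zt])
          show "\<theta> \<noteq> \<psi>" by (rule False)
          have "\<bar>\<psi> - \<theta>\<bar> < 2 * e" using h(1,2) unfolding abs_less_iff by auto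
          then show "\<bar>\<psi> - \<theta>\<bar> < pi/2" using e by linarith
          show "sg \<theta> = 1 \<or> sg \<theta> = -1" by (rule sg(1))
          fix u assume u: "btw \<theta> \<psi> u"
          then have "u \<noteq> x0 \<and> \<bar>u - x0\<bar> < e \<and> (\<theta> - x0) * (u - x0) > 0" by (rule btwside)
          then show "sg \<theta> * rho u > 0" using sg(2)[of \<theta> u] ne by auto
        qed
        have "tg \<psi> * q \<theta> > 0" "tg \<psi> * q \<psi> < 0"
          using T1 T2 qt qp sgeq by auto
        then have "q \<theta> * q \<psi> < 0" using tg(1)[of \<psi>] by (auto simp: mult_less_0_iff zero_less_mult_iff)
        then obtain z where z: "btw \<theta> \<psi> z" "q z = 0" using ivt_btw[OF q_cont] by blast
        from btwside[OF z(1)] have "z \<noteq> x0 \<and> \<bar>z - x0\<bar> < e4" using e by auto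
        then show False using e4 z(2) by blast
      qed
    qed
  qed
qed

end

lemma cont_pt:
  fixes f :: "real \<Rightarrow> real"
  assumes "isCont f x" "r > 0"
  shows "\<exists>s>0. \<forall>y. \<bar>y - x\<bar> < s \<longrightarrow> \<bar>f y - f x\<bar> < r"
proof -
  from LIM_D[OF assms(1)[unfolded isCont_def] assms(2)] obtain s where
    s: "s > 0" "\<forall>y. y \<noteq> x \<and> norm (y - x) < s \<longrightarrow> norm (f y - f x) < r" by blast
  show ?thesis
  proof (intro exI[of _ s] conjI allI impI s(1))
    fix y assume "\<bar>y - x\<bar> < s"
    then show "\<bar>f y - f x\<bar> < r" using s assms(2) by (cases "y = x") auto
  qed
qed

lemma sep_pt:
  fixes f :: "real \<Rightarrow> real"
  assumes "\<And>x. isCont f x" "f x0 \<noteq> f y0"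
  shows "\<exists>\<epsilon>>0. \<forall>x y. \<bar>x - x0\<bar> < \<epsilon> \<longrightarrow> \<bar>y - y0\<bar> < \<epsilon> \<longrightarrow> f x \<noteq> f y"
proof -
  define r where "r = \<bar>f x0 - f y0\<bar> / 2"
  have r: "r > 0" using assms(2) by (simp add: r_def)
  obtain s1 where s1: "s1 > 0" "\<forall>y. \<bar>y - x0\<bar> < s1 \<longrightarrow> \<bar>f y - f x0\<bar> < r" using cont_pt[OF assms(1) r] by blast
  obtain s2 where s2: "s2 > 0" "\<forall>y. \<bar>y - y0\<bar> < s2 \<longrightarrow> \<bar>f y - f y0\<bar> < r" using cont_pt[OF assms(1) r] by blast
  show ?thesis
  proof (intro exI[of _ "min s1 s2"] conjI allI impI)
    fix x y assume "\<bar>x - x0\<bar> < min s1 s2" "\<bar>y - y0\<bar> < min s1 s2"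
    then have "\<bar>f x - f x0\<bar> < r" "\<bar>f y - f y0\<bar> < r" using s1 s2 by auto
    then show "f x \<noteq> f y" unfolding r_def by (auto simp: abs_less_iff abs_if split: if_split_asm)
  qed (use s1 s2 in auto)
qed

context hedge
begin

lemma local_exc:
  assumes qiso: "\<not> od \<Longrightarrow> (\<forall>x0. \<exists>e>0. \<forall>t. t \<noteq> x0 \<and> \<bar>t - x0\<bar> < e \<longrightarrow> q t \<noteq> 0)"
    and per: "od \<Longrightarrow> (\<forall>t. gam (t + pi) = gam t)"
    and x0: "x0 \<in> {-pi..pi}" and y0: "\<phi>0 \<in> {-pi..pi}"
  shows "\<exists>\<epsilon>>0. \<forall>\<theta> \<phi>. \<bar>\<theta> - x0\<bar> < \<epsilon> \<longrightarrow> \<bar>\<phi> - \<phi>0\<bar> < \<epsilon> \<longrightarrow> \<theta> \<in> {-pi<..<pi} \<longrightarrow> \<phi> \<in> {-pi<..<pi}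
     \<longrightarrow> gam \<theta> = gam \<phi> \<longrightarrow> \<phi> \<noteq> \<theta> \<longrightarrow> (od \<longrightarrow> \<phi> \<noteq> \<theta> + pi \<and> \<phi> \<noteq> \<theta> - pi) \<longrightarrow> \<theta> = x0"
proof (cases "gam x0 = gam \<phi>0")
  case False
  then have "g1 x0 \<noteq> g1 \<phi>0 \<or> g2 x0 \<noteq> g2 \<phi>0" by (auto simp: gam_def)
  then obtain e where "e > 0" "\<forall>x y. \<bar>x - x0\<bar> < e \<longrightarrow> \<bar>y - \<phi>0\<bar> < e \<longrightarrow> gam x \<noteq> gam y"
  proof
    assume "g1 x0 \<noteq> g1 \<phi>0"
    from sep_pt[OF DERIV_isCont[OF g1_deriv] this] that show ?thesis by (force simp: gam_def)
  next
    assume "g2 x0 \<noteq> g2 \<phi>0"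
    from sep_pt[OF DERIV_isCont[OF g2_deriv] this] that show ?thesis by (force simp: gam_def)
  qed
  then show ?thesis by blast
next
  case True
  show ?thesis
  proof (cases "sin (\<phi>0 - x0) = 0")
    case False
    from chord[OF False True] show ?thesis by blast
  next
    case True
    then obtain i :: int where i: "\<phi>0 - x0 = of_int i * pi" using sin_zero_iff_int2 by blast
    have "\<phi>0 - x0 \<le> 2 * pi" "- 2 * pi \<le> \<phi>0 - x0" using x0 y0 by auto
    then have "of_int i * pi \<le> 2 * pi" "- 2 * pi \<le> of_int i * pi" unfolding i by auto
    then have "real_of_int i \<le> 2" "0 \<le> (real_of_int i + 2) * pi" by (simp_all add: mult_le_cancel_right algebra_simps)
    then have "real_of_int i \<le> 2" "0 \<le> real_of_int i + 2" using pi_gt_zero by (simp_all add: zero_le_mult_iff)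
    then have "i \<in> {-2, -1, 0, 1, 2}" by auto
    then have cases: "\<phi>0 = x0 \<or> \<phi>0 = x0 + 2*pi \<or> \<phi>0 = x0 - 2*pi \<or> \<phi>0 = x0 + pi \<or> \<phi>0 = x0 - pi"
      using i by (auto simp: algebra_simps)
    obtain e where e: "e > 0" "e \<le> pi/4" "\<forall>\<theta> \<phi>. \<bar>\<theta> - x0\<bar> < e \<longrightarrow> \<bar>\<phi> - x0\<bar> < e \<longrightarrow> gam \<theta> = gam \<phi> \<longrightarrow> \<theta> = \<phi>"
      using local_inj[of x0] by blast
    have lim: "\<bar>\<phi> - \<theta>\<bar> < 2*pi" if "\<theta> \<in> {-pi<..<pi}" "\<phi> \<in> {-pi<..<pi}" for \<theta> \<phi>
      using that by auto
    consider "\<phi>0 = x0" | "\<phi>0 = x0 + 2*pi" | "\<phi>0 = x0 - 2*pi" | "\<phi>0 = x0 + pi" | "\<phi>0 = x0 - pi"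
      using cases by blast
    then show ?thesis
    proof cases
      case 1
      show ?thesis
        by (intro exI[of _ e] conjI e(1) allI impI) (use e(3) 1 in blast)
    next
      case 2
      show ?thesis
      proof (intro exI[of _ e] conjI e(1) allI impI)
        fix \<theta> \<phi> assume h: "\<bar>\<theta> - x0\<bar> < e" "\<bar>\<phi> - \<phi>0\<bar> < e" "\<theta> \<in> {-pi<..<pi}" "\<phi> \<in> {-pi<..<pi}" "gam \<theta> = gam \<phi>"
        have "gam \<theta> = gam (\<phi> - 2*pi)" using h(5) gam_period' by simp
        moreover have "\<bar>(\<phi> - 2*pi) - x0\<bar> < e" using h(2) 2 by simp
        ultimately have "\<theta> = \<phi> - 2*pi" using e(3) h(1) by blast
        then show "\<theta> = x0" using lim[OF h(3,4)] by simp
      qed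
    next
      case 3
      show ?thesis
      proof (intro exI[of _ e] conjI e(1) allI impI)
        fix \<theta> \<phi> assume h: "\<bar>\<theta> - x0\<bar> < e" "\<bar>\<phi> - \<phi>0\<bar> < e" "\<theta> \<in> {-pi<..<pi}" "\<phi> \<in> {-pi<..<pi}" "gam \<theta> = gam \<phi>"
        have "gam \<theta> = gam (\<phi> + 2*pi)" using h(5) gam_period by simp
        moreover have "\<bar>(\<phi> + 2*pi) - x0\<bar> < e" using h(2) 3 by simp
        ultimately have "\<theta> = \<phi> + 2*pi" using e(3) h(1) by blast
        then show "\<theta> = x0" using lim[OF h(3,4)] by simp
      qed
    next
      case 4
      show ?thesis
      proof (cases od)
        case True
        show ?thesis
        proof (intro exI[of _ e] conjI e(1) allI impI)
          fix \<theta> \<phi> assume h: "\<bar>\<theta> - x0\<bar> < e" "\<bar>\<phi> - \<phi>0\<bar> < e" "\<theta> \<in> {-pi<..<pi}" "\<phi> \<in> {-pi<..<pi}"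
            "gam \<theta> = gam \<phi>" "\<phi> \<noteq> \<theta>" "od \<longrightarrow> \<phi> \<noteq> \<theta> + pi \<and> \<phi> \<noteq> \<theta> - pi"
          have "gam \<theta> = gam (\<phi> - pi)" using h(5) per[OF True] by (metis diff_add_cancel)
          moreover have "\<bar>(\<phi> - pi) - x0\<bar> < e" using h(2) 4 by simp
          ultimately have "\<theta> = \<phi> - pi" using e(3) h(1) by blast
          then show "\<theta> = x0" using h(7) True by simp
        qed
      next
        case False
        have X: "gam x0 = gam (x0 + pi)" using \<open>gam x0 = gam \<phi>0\<close> 4 by simp
        obtain e' where e': "e' > 0" "\<forall>\<theta> \<psi>. \<bar>\<theta> - x0\<bar> < e' \<longrightarrow> \<bar>\<psi> - x0\<bar> < e' \<longrightarrow> gam \<theta> = gam (\<psi> + pi) \<longrightarrow> \<theta> = x0"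
          using pi_lemma[OF qiso[OF False, rule_format] X] by blast
        show ?thesis
        proof (intro exI[of _ e'] conjI e'(1) allI impI)
          fix \<theta> \<phi> assume h: "\<bar>\<theta> - x0\<bar> < e'" "\<bar>\<phi> - \<phi>0\<bar> < e'" "gam \<theta> = gam \<phi>"
          have "gam \<theta> = gam ((\<phi> - pi) + pi)" using h(3) by simp
          moreover have "\<bar>(\<phi> - pi) - x0\<bar> < e'" using h(2) 4 by simp
          ultimately show "\<theta> = x0" using e'(2) h(1) by blast
        qed
      qed
    next
      case 5
      show ?thesis
      proof (cases od)
        case True
        show ?thesis
        proof (intro exI[of _ e] conjI e(1) allI impI)
          fix \<theta> \<phi> assume h: "\<bar>\<theta> - x0\<bar> < e" "\<bar>\<phi> - \<phi>0\<bar> < e" "\<theta> \<in> {-pi<..<pi}" "\<phi> \<in> {-pi<..<pi}"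
            "gam \<theta> = gam \<phi>" "\<phi> \<noteq> \<theta>" "od \<longrightarrow> \<phi> \<noteq> \<theta> + pi \<and> \<phi> \<noteq> \<theta> - pi"
          have "gam \<theta> = gam (\<phi> + pi)" using h(5) per[OF True] by metis
          moreover have "\<bar>(\<phi> + pi) - x0\<bar> < e" using h(2) 5 by simp
          ultimately have "\<theta> = \<phi> + pi" using e(3) h(1) by blast
          then show "\<theta> = x0" using h(7) True by simp
        qed
      next
        case False
        have X: "gam x0 = gam (x0 + pi)"
          using \<open>gam x0 = gam \<phi>0\<close> 5 gam_period[of "x0 - pi"] by (simp add: algebra_simps)
        obtain e' where e': "e' > 0" "\<forall>\<theta> \<psi>. \<bar>\<theta> - x0\<bar> < e' \<longrightarrow> \<bar>\<psi> - x0\<bar> < e' \<longrightarrow> gam \<theta> = gam (\<psi> + pi) \<longrightarrow> \<theta> = x0"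
          using pi_lemma[OF qiso[OF False, rule_format] X] by blast
        show ?thesis
        proof (intro exI[of _ e'] conjI e'(1) allI impI)
          fix \<theta> \<phi> assume h: "\<bar>\<theta> - x0\<bar> < e'" "\<bar>\<phi> - \<phi>0\<bar> < e'" "gam \<theta> = gam \<phi>"
          have "gam \<theta> = gam ((\<phi> + pi) + pi)" using h(3) gam_period[of \<phi>] by (simp add: algebra_simps)
          moreover have "\<bar>(\<phi> + pi) - x0\<bar> < e'" using h(2) 5 by simp
          ultimately show "\<theta> = x0" using e'(2) h(1) by blast
        qed
      qed
    qed
  qed
qed

end

lemma tp_odd:
  assumes "\<forall>k\<in>{1..M}. even k \<longrightarrow> \<alpha> k = 0 \<and> \<beta> k = 0"
  shows "tp 0 \<alpha> \<beta> M (t + pi) = - tp 0 \<alpha> \<beta> M t"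
proof -
  have "tp 0 \<alpha> \<beta> M t + tp 0 \<alpha> \<beta> M (t + pi) = tp 0 (\<lambda>k. \<alpha> k + (-1)^k * \<alpha> k) (\<lambda>k. \<beta> k + (-1)^k * \<beta> k) M t"
    unfolding tp_shift_pi tp_add by simp
  also have "\<dots> = 0" unfolding tp_def
    by (rule trans[OF _ add_0_left], rule arg_cong[where f = "\<lambda>x. 0 + x"], rule sum.neutral)
       (use assms in \<open>auto simp: neg_one_even_power neg_one_odd_power\<close>)
  finally show ?thesis by linarith
qed

context hedge
begin

definition "Exc ob = {\<theta>. \<exists>\<phi>. \<theta> \<in> {-pi<..<pi} \<and> \<phi> \<in> {-pi<..<pi} \<and> gam \<theta> = gam \<phi> \<and> \<phi> \<noteq> \<theta>
   \<and> (ob \<longrightarrow> \<phi> \<noteq> \<theta> + pi \<and> \<phi> \<noteq> \<theta> - pi)}"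

lemma Exc_finite:
  assumes qiso: "\<not> ob \<Longrightarrow> (\<forall>x0. \<exists>e>0. \<forall>t. t \<noteq> x0 \<and> \<bar>t - x0\<bar> < e \<longrightarrow> q t \<noteq> 0)"
    and per: "ob \<Longrightarrow> (\<forall>t. gam (t + pi) = gam t)"
  shows "finite (Exc ob)"
proof -
  let ?K = "{-pi..pi} \<times> {-pi..pi}"
  have "\<forall>z\<in>?K. \<exists>\<epsilon>>0. \<forall>\<theta> \<phi>. \<bar>\<theta> - fst z\<bar> < \<epsilon> \<longrightarrow> \<bar>\<phi> - snd z\<bar> < \<epsilon> \<longrightarrow> \<theta> \<in> {-pi<..<pi} \<longrightarrow> \<phi> \<in> {-pi<..<pi}
     \<longrightarrow> gam \<theta> = gam \<phi> \<longrightarrow> \<phi> \<noteq> \<theta> \<longrightarrow> (ob \<longrightarrow> \<phi> \<noteq> \<theta> + pi \<and> \<phi> \<noteq> \<theta> - pi) \<longrightarrow> \<theta> = fst z"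
    using local_exc[OF qiso per] by (auto simp: mem_Times_iff)
  then obtain E where E: "\<And>z. z \<in> ?K \<Longrightarrow> E z > 0"
    "\<And>z \<theta> \<phi>. z \<in> ?K \<Longrightarrow> \<bar>\<theta> - fst z\<bar> < E z \<Longrightarrow> \<bar>\<phi> - snd z\<bar> < E z \<Longrightarrow> \<theta> \<in> {-pi<..<pi} \<Longrightarrow> \<phi> \<in> {-pi<..<pi}
     \<Longrightarrow> gam \<theta> = gam \<phi> \<Longrightarrow> \<phi> \<noteq> \<theta> \<Longrightarrow> (ob \<longrightarrow> \<phi> \<noteq> \<theta> + pi \<and> \<phi> \<noteq> \<theta> - pi) \<Longrightarrow> \<theta> = fst z"
    by metis
  define U where "U z = ball (fst z) (E z) \<times> ball (snd z) (E z)" for z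
  have cK: "compact ?K" by (intro compact_Times compact_Icc)
  have "?K \<subseteq> (\<Union>z\<in>?K. U z)"
  proof
    fix z assume "z \<in> ?K"
    then have "z \<in> U z" using E(1)[of z] by (cases z) (auto simp: U_def)
    then show "z \<in> (\<Union>z\<in>?K. U z)" using \<open>z \<in> ?K\<close> by blast
  qed
  then obtain C where C: "C \<subseteq> ?K" "finite C" "?K \<subseteq> (\<Union>z\<in>C. U z)"
    using compactE_image[OF cK, of ?K U] by (auto simp: U_def intro!: open_Times)
  have "Exc ob \<subseteq> fst ` C"
  proof
    fix \<theta> assume "\<theta> \<in> Exc ob"
    then obtain \<phi> where h: "\<theta> \<in> {-pi<..<pi}" "\<phi> \<in> {-pi<..<pi}" "gam \<theta> = gam \<phi>" "\<phi> \<noteq> \<theta>"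
      "ob \<longrightarrow> \<phi> \<noteq> \<theta> + pi \<and> \<phi> \<noteq> \<theta> - pi" unfolding Exc_def by blast
    then have "(\<theta>, \<phi>) \<in> ?K" by auto
    then obtain z where z: "z \<in> C" "(\<theta>, \<phi>) \<in> U z" using C(3) by blast
    then have "\<bar>\<theta> - fst z\<bar> < E z" "\<bar>\<phi> - snd z\<bar> < E z"
      by (auto simp: U_def dist_real_def abs_minus_commute)
    then have "\<theta> = fst z" using E(2)[of z \<theta> \<phi>] z(1) C(1) h by blast
    then show "\<theta> \<in> fst ` C" using z(1) by blast
  qed
  then show ?thesis using C(2) finite_subset by blast
qed

lemma arctan_range: "2 * arctan t \<in> {-pi<..<pi}"
  using arctan_bounded[of t] by auto

lemma inj_arc: "inj (\<lambda>t::real. 2 * arctan t)"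
  by (rule injI) (simp add: arctan_eq_iff)

lemma count1:
  assumes "finite (Exc False)"
  shows "finite {t. card {s. gam (2 * arctan s) = gam (2 * arctan t)} \<noteq> 1}"
proof -
  have "{t. card {s. gam (2 * arctan s) = gam (2 * arctan t)} \<noteq> 1} \<subseteq> (\<lambda>t. 2 * arctan t) -` Exc False"
  proof
    fix t assume t: "t \<in> {t. card {s. gam (2 * arctan s) = gam (2 * arctan t)} \<noteq> 1}"
    show "t \<in> (\<lambda>t. 2 * arctan t) -` Exc False"
    proof (rule ccontr)
      assume nE: "t \<notin> (\<lambda>t. 2 * arctan t) -` Exc False"
      have "{s. gam (2 * arctan s) = gam (2 * arctan t)} = {t}"
      proof (rule set_eqI, rule iffI)
        fix s assume s: "s \<in> {s. gam (2 * arctan s) = gam (2 * arctan t)}"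
        show "s \<in> {t}"
        proof (rule ccontr)
          assume "s \<notin> {t}"
          then have "2 * arctan s \<noteq> 2 * arctan t" by (simp add: arctan_eq_iff)
          then have "2 * arctan t \<in> Exc False" using s arctan_range[of s] arctan_range[of t]
            unfolding Exc_def by force
          then show False using nE by simp
        qed
      qed simp
      then show False using t by simp
    qed
  qed
  moreover have "finite ((\<lambda>t. 2 * arctan t) -` Exc False)"
    by (rule finite_vimageI[OF assms inj_arc])
  ultimately show ?thesis using finite_subset by blast
qed

lemma count2:
  assumes "finite (Exc True)" and per: "\<forall>t. gam (t + pi) = gam t"
  shows "finite {t. card {s. gam (2 * arctan s) = gam (2 * arctan t)} \<noteq> 2}"
proof -
  have "{t. card {s. gam (2 * arctan s) = gam (2 * arctan t)} \<noteq> 2} \<subseteq> insert 0 ((\<lambda>t. 2 * arctan t) -` Exc True)"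
  proof
    fix t assume t: "t \<in> {t. card {s. gam (2 * arctan s) = gam (2 * arctan t)} \<noteq> 2}"
    show "t \<in> insert 0 ((\<lambda>t. 2 * arctan t) -` Exc True)"
    proof (rule ccontr)
      assume nE: "t \<notin> insert 0 ((\<lambda>t. 2 * arctan t) -` Exc True)"
      then have t0: "t \<noteq> 0" by simp
      define \<theta> where "\<theta> = 2 * arctan t"
      have arc: "2 * arctan (- 1 / t) = \<theta> - sgn t * pi"
        using Transcendental.arctan_inverse[OF t0] by (simp add: \<theta>_def arctan_minus algebra_simps)
      have gm: "gam (\<theta> - sgn t * pi) = gam \<theta>"
      proof (cases "t > 0")
        case True then show ?thesis using per[rule_format, of "\<theta> - pi"] by simp
      next
        case False then have "t < 0" using t0 by simp
        then show ?thesis using per[rule_format, of \<theta>] by simp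
      qed
      have sgnth: "sgn t * \<theta> > 0" using t0 arctan_less_zero_iff[of t] arctan_eq_zero_iff[of t]
        by (cases "t > 0") (auto simp: \<theta>_def sgn_if)
      have "{s. gam (2 * arctan s) = gam (2 * arctan t)} = {t, - 1 / t}"
      proof (rule set_eqI, rule iffI)
        fix s assume s: "s \<in> {s. gam (2 * arctan s) = gam (2 * arctan t)}"
        show "s \<in> {t, - 1 / t}"
        proof (rule ccontr)
          assume sn: "s \<notin> {t, - 1 / t}"
          define \<phi> where "\<phi> = 2 * arctan s"
          have "\<phi> \<noteq> \<theta>" using sn by (simp add: \<phi>_def \<theta>_def arctan_eq_iff)
          moreover have "\<phi> \<noteq> \<theta> - sgn t * pi"
          proof
            assume "\<phi> = \<theta> - sgn t * pi"
            then have "arctan s = arctan (- 1 / t)" using arc by (simp add: \<phi>_def)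
            then show False using sn by (simp add: arctan_eq_iff)
          qed
          moreover have "\<phi> \<noteq> \<theta> + sgn t * pi"
          proof
            assume "\<phi> = \<theta> + sgn t * pi"
            then have "sgn t * \<phi> = sgn t * \<theta> + pi" using t0 by (simp add: algebra_simps sgn_if)
            moreover have "\<bar>\<phi>\<bar> < pi" using arctan_range[of s] by (auto simp: \<phi>_def)
            ultimately show False using sgnth t0 by (auto simp: sgn_if split: if_splits)
          qed
          ultimately have "\<phi> \<noteq> \<theta> + pi \<and> \<phi> \<noteq> \<theta> - pi" using t0 by (auto simp: sgn_if split: if_splits)
          then have "\<theta> \<in> Exc True" using s \<open>\<phi> \<noteq> \<theta>\<close> arctan_range[of s] arctan_range[of t]
            unfolding Exc_def \<phi>_def \<theta>_def by force
          then show False using nE by (simp add: \<theta>_def)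
        qed
      next
        fix s assume "s \<in> {t, - 1 / t}"
        then show "s \<in> {s. gam (2 * arctan s) = gam (2 * arctan t)}"
          using arc gm by (auto simp: \<theta>_def)
      qed
      moreover have "t \<noteq> - 1 / t"
      proof
        assume "t = - 1 / t"
        then have "t * t = -1" using t0 by (simp add: field_simps)
        moreover have "t * t \<ge> 0" by simp
        ultimately show False by linarith
      qed
      ultimately show False using t by simp
    qed
  qed
  moreover have "finite (insert 0 ((\<lambda>t. 2 * arctan t) -` Exc True))"
    using finite_vimageI[OF assms(1) inj_arc] by simp
  ultimately show ?thesis using finite_subset by blast
qed

end

theorem lemma2p3:
  fixes a b :: "nat \<Rightarrow> real" and N :: nat
  assumes "N \<ge> 2"
    and "a N \<noteq> 0 \<or> b N \<noteq> 0"
  shows "(((\<exists>k. 2 * k \<le> N \<and> a (2 * k) \<noteq> 0) \<or> (\<exists>k. 2 \<le> 2 * k \<and> 2 * k \<le> N \<and> b (2 * k) \<noteq> 0))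
           \<longrightarrow> (\<forall>\<^sub>F t in cofinite.
                 card {s. ratpar (trig_poly a b N) s = ratpar (trig_poly a b N) t} = 1))
         \<and> ((\<forall>k. 2 * k \<le> N \<longrightarrow> a (2 * k) = 0 \<and> (1 \<le> k \<longrightarrow> b (2 * k) = 0))
           \<longrightarrow> (\<forall>\<^sub>F t in cofinite.
                 card {s. ratpar (trig_poly a b N) s = ratpar (trig_poly a b N) t} = 2))"
proof -
  interpret hedge a b N using assms by unfold_locales
  have rp: "ratpar (trig_poly a b N) s = gam (2 * arctan s)" for s
    by (simp add: ratpar_def gamma_eq)
  show ?thesis
  proof (intro conjI impI)
    assume H: "(\<exists>k. 2 * k \<le> N \<and> a (2 * k) \<noteq> 0) \<or> (\<exists>k. 2 \<le> 2 * k \<and> 2 * k \<le> N \<and> b (2 * k) \<noteq> 0)"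
    have nz: "\<not> (a 0 + a 0 = 0 \<and> (\<forall>k\<in>{1..N}. a k + (-1)^k * a k = 0 \<and> b k + (-1)^k * b k = 0))"
    proof
      assume Z: "a 0 + a 0 = 0 \<and> (\<forall>k\<in>{1..N}. a k + (-1)^k * a k = 0 \<and> b k + (-1)^k * b k = 0)"
      from H show False
      proof
        assume "\<exists>k. 2 * k \<le> N \<and> a (2 * k) \<noteq> 0"
        then obtain k where k: "2 * k \<le> N" "a (2 * k) \<noteq> 0" by blast
        show False
        proof (cases "k = 0")
          case True then show False using k Z by simp
        next
          case False
          then have "2 * k \<in> {1..N}" using k by auto
          then have "a (2*k) + (-1)^(2*k) * a (2*k) = 0" using Z by blast
          then show False using k by simp
        qed
      next
        assume "\<exists>k. 2 \<le> 2 * k \<and> 2 * k \<le> N \<and> b (2 * k) \<noteq> 0"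
        then obtain k where k: "2 \<le> 2 * k" "2 * k \<le> N" "b (2 * k) \<noteq> 0" by blast
        then have "2 * k \<in> {1..N}" by auto
        then have "b (2*k) + (-1)^(2*k) * b (2*k) = 0" using Z by blast
        then show False using k by simp
      qed
    qed
    have qiso: "\<forall>x0. \<exists>e>0. \<forall>t. t \<noteq> x0 \<and> \<bar>t - x0\<bar> < e \<longrightarrow> q t \<noteq> 0"
    proof
      fix x0 show "\<exists>e>0. \<forall>t. t \<noteq> x0 \<and> \<bar>t - x0\<bar> < e \<longrightarrow> q t \<noteq> 0"
        using tp_isolated[OF nz, of x0] by (simp add: q_tp)
    qed
    have "finite (Exc False)" by (rule Exc_finite) (use qiso in auto)
    then have "finite {t. card {s. gam (2 * arctan s) = gam (2 * arctan t)} \<noteq> 1}" by (rule count1)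
    then show "\<forall>\<^sub>F t in cofinite. card {s. ratpar (trig_poly a b N) s = ratpar (trig_poly a b N) t} = 1"
      by (simp add: eventually_cofinite rp)
  next
    assume H: "\<forall>k. 2 * k \<le> N \<longrightarrow> a (2 * k) = 0 \<and> (1 \<le> k \<longrightarrow> b (2 * k) = 0)"
    have ev: "a k = 0 \<and> b k = 0" if "k \<in> {1..N}" "even k" for k
    proof -
      obtain j where j: "k = 2 * j" using \<open>even k\<close> by blast
      then have "1 \<le> j" "2 * j \<le> N" using that by auto
      then show ?thesis using H j by blast
    qed
    have a0: "a 0 = 0" using H[rule_format, of 0] by simp
    have pp: "p (t + pi) = - p t" for t
      unfolding p_def a0 by (rule tp_odd) (use ev in auto)
    have dpp: "dp (t + pi) = - dp t" for t
      unfolding dp_def by (rule tp_odd) (use ev in auto)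
    have per: "\<forall>t. gam (t + pi) = gam t"
      by (simp add: gam_def g1_def g2_def pp dpp)
    have "finite (Exc True)" by (rule Exc_finite) (use per in auto)
    then have "finite {t. card {s. gam (2 * arctan s) = gam (2 * arctan t)} \<noteq> 2}" using per by (rule count2)
    then show "\<forall>\<^sub>F t in cofinite. card {s. ratpar (trig_poly a b N) s = ratpar (trig_poly a b N) t} = 2"
      by (simp add: eventually_cofinite rp)
  qed
qed

end
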